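(* Let $n,k\in\mathbb{N}$. If a finite set $X\subseteq\mathbb{N}$ is $\omega^{n+6k}$-large and exp-sparse, then $X$ admits an $(\omega^n,\omega^k)$-grouping, i.e. for every colouring $P:[X]^2\to 2$ there exists an $(\omega^n,\omega^k)$-grouping for $P$.
   Context: Ordinals below $\omega^\omega$ are in Cantor normal form; $\omega^j\cdot m$ = sum of $m$ copies of $\omega^j$. For $m\in\mathbb{N}$: $0[m]=0$, $(\beta+1)[m]=\beta$, $(\beta+\omega^{n})[m]=\beta+\omega^{n-1}\cdot m$ for $n\ge1$. A finite $X=\{x_0<\dots<x_{\ell-1}\}\subseteq\mathbb{N}$ is $\alpha$-large if $\alpha[x_0]\cdots[x_{\ell-1}]=0$. A set $X$ with $\min X\ge3$ is exp-sparse if $x<y$ in $X$ implies $4^x<y$. For $\alpha,\beta<\omega^\omega$, $X\subseteq\mathbb{N}$ and $P:[X]^2\to2$, a finite sequence $\langle F_i\subseteq X:i<\ell\rangle$ of finite sets is an $(\alpha,\beta)$-grouping for $P$ if: (1) $\max F_i<\min F_j$ for all $i<j<\ell$; (2) each $F_i$ is $\alpha$-large; (3) $\{\max F_i:i<\ell\}$ is $\beta$-large; (4) for all $i<j<\ell$, all $x,x'\in F_i$ and $y,y'\in F_j$, $P(x,y)=P(x',y')$. *)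

theory Defs
  imports Main
begin

text \<open>Ordinals below omega^omega in Cantor normal form
  omega^e_1 + ... + omega^e_k with e_1 >= ... >= e_k are represented by the list
  of exponents in REVERSED order [e_k, ..., e_1] (smallest exponent first, i.e.
  the head is the exponent of the last CNF term).\<close>

type_synonym ord_cnf = "nat list"

definition ord_wf :: "ord_cnf \<Rightarrow> bool" where
  "ord_wf a \<longleftrightarrow> sorted a"

definition omega_pow :: "nat \<Rightarrow> ord_cnf" where
  "omega_pow n = [n]"

text \<open>Fundamental sequence: 0[m] = 0, (b+1)[m] = b,
  (b + omega^(n+1))[m] = b + omega^n * m.\<close>
fun fund :: "ord_cnf \<Rightarrow> nat \<Rightarrow> ord_cnf" where
  "fund [] m = []"
| "fund (0 # r) m = r"
| "fund (Suc n # r) m = replicate m n @ r"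

definition large :: "ord_cnf \<Rightarrow> nat set \<Rightarrow> bool" where
  "large \<alpha> X \<longleftrightarrow> finite X \<and> foldl fund \<alpha> (sorted_list_of_set X) = []"

definition exp_sparse :: "nat set \<Rightarrow> bool" where
  "exp_sparse X \<longleftrightarrow> (\<forall>x\<in>X. 3 \<le> x) \<and> (\<forall>x\<in>X. \<forall>y\<in>X. x < y \<longrightarrow> 4 ^ x < y)"

text \<open>A colouring P of [X]^2 is given as P x y for x < y in X.
  A finite sequence of sets is given by its length l and F :: nat => nat set.\<close>
definition grouping ::
  "ord_cnf \<Rightarrow> ord_cnf \<Rightarrow> nat set \<Rightarrow> (nat \<Rightarrow> nat \<Rightarrow> bool) \<Rightarrow> nat \<Rightarrow> (nat \<Rightarrow> nat set) \<Rightarrow> bool" where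
  "grouping \<alpha> \<beta> X P l F \<longleftrightarrow>
     (\<forall>i<l. finite (F i) \<and> F i \<subseteq> X) \<and>
     (\<forall>i j. i < j \<and> j < l \<longrightarrow> Max (F i) < Min (F j)) \<and>
     (\<forall>i<l. large \<alpha> (F i)) \<and>
     large \<beta> ((\<lambda>i. Max (F i)) ` {..<l}) \<and>
     (\<forall>i j. i < j \<and> j < l \<longrightarrow>
        (\<forall>x\<in>F i. \<forall>x'\<in>F i. \<forall>y\<in>F j. \<forall>y'\<in>F j. P x y = P x' y'))"

end

theory Submission
  imports Defs
begin


lemma ssl_set: "sorted_wrt (<) (l::nat list) \<Longrightarrow> sorted_list_of_set (set l) = l"
  by (metis distinct_remdups_id sorted_list_of_set_sort_remdups sorted_sort_id strict_sorted_iff)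

lemma fund_0: "fund a 0 = tl a"
  by (cases "(a,0::nat)" rule: fund.cases) auto

lemma fund_app: "a \<noteq> [] \<Longrightarrow> fund (a @ d) m = fund a m @ d"
  by (cases "(a,m)" rule: fund.cases) auto

lemma foldl_nil[simp]: "foldl fund [] xs = []"
  by (induction xs) auto

inductive reach :: "nat \<Rightarrow> ord_cnf \<Rightarrow> ord_cnf \<Rightarrow> bool" for y where
  refl: "reach y a a"
| step: "reach y a b \<Longrightarrow> z \<le> y \<Longrightarrow> reach y (fund a z) b"

lemma reach_trans: "reach y a b \<Longrightarrow> reach y b c \<Longrightarrow> reach y a c"
proof (induction a b rule: reach.induct)
  case (refl a) then show ?case by simp
next
  case (step a b z) then show ?case using reach.step by blast
qed

lemma reach_nil: "reach y a b \<Longrightarrow> b = [] \<Longrightarrow> a = []"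
proof (induction a b rule: reach.induct)
  case (refl a) then show ?case by simp
next
  case (step a b z) then show ?case by simp
qed

lemma reach_drop: "reach y (drop i a) a"
proof (induction i)
  case 0 then show ?case by (simp add: reach.refl)
next
  case (Suc i)
  have "reach y (fund (drop i a) 0) a" by (rule reach.step[OF Suc]) simp
  then show ?case by (simp add: fund_0 drop_Suc drop_tl)
qed

lemma reach_key: assumes "z \<le> x" shows "reach x (fund (fund a z) x) (fund a x)"
proof (cases "(a,x)" rule: fund.cases)
  case (1 m) then show ?thesis by (simp add: reach.refl)
next
  case (2 r m)
  have "reach x (fund r x) r" by (rule reach.step[OF reach.refl]) simp
  then show ?thesis using 2 by simp
next
  case (3 e r m)
  have "reach x (replicate z e @ r) (replicate x e @ r)"
    using reach_drop[of x "x - z" "replicate x e @ r"] assms by simp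
  then have "reach x (fund (replicate z e @ r) x) (replicate x e @ r)"
    by (rule reach.step) simp
  then show ?thesis using 3 by simp
qed

lemma reach_R1: "reach y a b \<Longrightarrow> y \<le> x \<Longrightarrow> reach x (fund a x) (fund b x)"
proof (induction a b rule: reach.induct)
  case (refl a) show ?case by (rule reach.refl)
next
  case (step a b z)
  have "reach x (fund (fund a z) x) (fund a x)" using step by (intro reach_key) simp
  then show ?case using step reach_trans by blast
qed

lemma reach_R2: "foldl fund b xs = [] \<Longrightarrow> reach y a b \<Longrightarrow> sorted xs \<Longrightarrow> (\<forall>x\<in>set xs. y \<le> x)
  \<Longrightarrow> foldl fund a xs = []"
proof (induction xs arbitrary: a b y)
  case Nil then show ?case using reach_nil by auto
next
  case (Cons x xs)
  have r: "reach x (fund a x) (fund b x)" using reach_R1[OF Cons.prems(2)] Cons.prems(4) by simp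
  have "foldl fund (fund b x) xs = []" using Cons.prems(1) by simp
  from Cons.IH[OF this r] Cons.prems show ?case by auto
qed

lemma prepend: "foldl fund a zs = [] \<Longrightarrow> sorted zs \<Longrightarrow> (\<forall>z\<in>set zs. x \<le> z) \<Longrightarrow> foldl fund a (x # zs) = []"
proof -
  assume h: "foldl fund a zs = []" "sorted zs" "\<forall>z\<in>set zs. x \<le> z"
  have "reach x (fund a x) a" by (rule reach.step[OF reach.refl]) simp
  from reach_R2[OF _ this] h show ?thesis by simp
qed

lemma prepend_list: "foldl fund a zs = [] \<Longrightarrow> sorted (ws @ zs) \<Longrightarrow> foldl fund a (ws @ zs) = []"
proof (induction ws)
  case Nil then show ?case by simp
next
  case (Cons w ws)
  then have "foldl fund a (ws @ zs) = []" by simp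
  then show ?case using prepend[of a "ws @ zs" w] Cons.prems by simp
qed

lemma weaken: "foldl fund [b] xs = [] \<Longrightarrow> a \<le> b \<Longrightarrow> sorted xs \<Longrightarrow> (\<forall>x\<in>set xs. 1 \<le> x) \<Longrightarrow> foldl fund [a] xs = []"
proof -
  assume h: "foldl fund [b] xs = []" "a \<le> b" "sorted xs" "\<forall>x\<in>set xs. 1 \<le> x"
  have "reach 1 [b - i] [b]" for i
  proof (induction i)
    case 0 then show ?case by (simp add: reach.refl)
  next
    case (Suc i)
    show ?case
    proof (cases "b - i")
      case 0 then show ?thesis using Suc by simp
    next
      case (Suc e)
      have "reach 1 (fund [b - i] 1) [b]" by (rule reach.step[OF Suc.IH]) simp
      then show ?thesis using Suc by (simp add: Suc_diff_Suc diff_Suc) 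
    qed
  qed
  from this[of "b - a"] h show ?thesis using reach_R2 by auto
qed

lemma split_exact: "foldl fund a ys = [] \<Longrightarrow> \<exists>ys1 ys2. ys = ys1 @ ys2 \<and> (\<forall>d. foldl fund (a @ d) ys1 = d)"
proof (induction ys arbitrary: a)
  case Nil then show ?case by auto
next
  case (Cons y ys)
  show ?case
  proof (cases "a = []")
    case True
    have "y # ys = [] @ (y#ys) \<and> (\<forall>d. foldl fund (a @ d) [] = d)" using True by simp
    then show ?thesis by blast
  next
    case False
    from Cons.IH[of "fund a y"] Cons.prems obtain ys1 ys2 where
      "ys = ys1 @ ys2" "\<forall>d. foldl fund (fund a y @ d) ys1 = d" by auto
    then show ?thesis using False by (intro exI[of _ "y # ys1"] exI[of _ ys2]) (auto simp: fund_app)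
  qed
qed

lemma split_app: "foldl fund (a @ d) xs = [] \<Longrightarrow> \<exists>ys zs. xs = ys @ zs \<and> foldl fund a ys = [] \<and> foldl fund d zs = []"
proof (induction xs arbitrary: a)
  case Nil then show ?case by auto
next
  case (Cons x xs)
  show ?case
  proof (cases "a = []")
    case True
    have "x # xs = [] @ (x#xs) \<and> foldl fund a [] = [] \<and> foldl fund d (x#xs) = []" using True Cons.prems by simp
    then show ?thesis by blast
  next
    case False
    then have "foldl fund (fund a x @ d) xs = []" using Cons.prems by (simp add: fund_app)
    from Cons.IH[OF this] obtain ys zs where "xs = ys @ zs" "foldl fund (fund a x) ys = []" "foldl fund d zs = []" by auto
    then show ?thesis by (intro exI[of _ "x # ys"] exI[of _ zs]) auto
  qed
qed

lemma chunks_list: "foldl fund (replicate j e @ d) xs = [] \<Longrightarrow>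
  \<exists>yss zs. xs = concat yss @ zs \<and> length yss = j \<and> (\<forall>ys\<in>set yss. foldl fund [e] ys = []) \<and> foldl fund d zs = []"
proof (induction j arbitrary: xs)
  case 0
  have "xs = concat [] @ xs \<and> length ([]::nat list list) = 0 \<and> (\<forall>ys\<in>set []. foldl fund [e] ys = []) \<and> foldl fund d xs = []"
    using 0 by simp
  then show ?case by blast
next
  case (Suc j)
  from split_app[of "[e]" "replicate j e @ d" xs] Suc.prems obtain ys zs where
    "xs = ys @ zs" "foldl fund [e] ys = []" "foldl fund (replicate j e @ d) zs = []" by auto
  with Suc.IH[of zs] obtain yss zs' where "zs = concat yss @ zs'" "length yss = j"
    "\<forall>ys\<in>set yss. foldl fund [e] ys = []" "foldl fund d zs' = []" by auto
  then show ?case using \<open>xs = ys @ zs\<close> \<open>foldl fund [e] ys = []\<close>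
    by (intro exI[of _ "ys # yss"] exI[of _ zs']) auto
qed

lemma cat_list: "sorted (concat yss) \<Longrightarrow> j \<le> length yss \<Longrightarrow> (\<forall>ys\<in>set yss. foldl fund [e] ys = [])
  \<Longrightarrow> foldl fund (replicate j e) (concat yss) = []"
proof (induction j arbitrary: yss)
  case 0 then show ?case by simp
next
  case (Suc j)
  then obtain ys yss' where yss: "yss = ys # yss'" by (cases yss) auto
  with Suc.prems have "foldl fund [e] ys = []" by simp
  from split_exact[OF this] obtain ys1 ys2 where ys: "ys = ys1 @ ys2" "\<forall>d. foldl fund ([e] @ d) ys1 = d" by auto
  have IH: "foldl fund (replicate j e) (concat yss') = []"
    using Suc.IH[of yss'] Suc.prems yss by (auto simp: sorted_append)
  have "foldl fund (replicate (Suc j) e) (concat yss) = foldl fund (replicate j e) (ys2 @ concat yss')"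
    using yss ys by simp
  also have "\<dots> = []" using prepend_list[OF IH, of ys2] Suc.prems yss ys by (simp add: sorted_append)
  finally show ?case .
qed

lemma large1_list: "foldl fund (replicate m 0) ys = replicate (m - length ys) 0"
proof (induction ys arbitrary: m)
  case Nil then show ?case by simp
next
  case (Cons y ys)
  have "fund (replicate m 0) y = replicate (m - 1) 0" by (cases m) auto
  then show ?case using Cons.IH[of "m - 1"] by simp
qed



lemma sorted_wrt_concat_iff:
  "sorted_wrt R (concat xss) \<longleftrightarrow> (\<forall>xs\<in>set xss. sorted_wrt R xs) \<and> sorted_wrt (\<lambda>xs ys. \<forall>x\<in>set xs. \<forall>y\<in>set ys. R x y) xss"
  by (induction xss) (auto simp: sorted_wrt_append)

lemma large_nonempty: "large a X \<Longrightarrow> a \<noteq> [] \<Longrightarrow> X \<noteq> {}"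
  unfolding large_def by auto

lemma large_Min: "finite X \<Longrightarrow> X \<noteq> {} \<Longrightarrow> large a X \<longleftrightarrow> large (fund a (Min X)) (X - {Min X})"
  unfolding large_def by (simp add: sorted_list_of_set_nonempty)

lemma insort_split: "sorted xs \<Longrightarrow> \<exists>as bs. xs = as @ bs \<and> insort z xs = as @ z # bs \<and> (\<forall>b\<in>set bs. z \<le> b)"
proof (induction xs)
  case Nil then show ?case by auto
next
  case (Cons x xs)
  show ?case
  proof (cases "z \<le> x")
    case True
    then have "x # xs = [] @ (x#xs) \<and> insort z (x#xs) = [] @ z # (x # xs) \<and> (\<forall>b\<in>set (x#xs). z \<le> b)"
      using Cons.prems by auto
    then show ?thesis by blast
  next
    case False
    from Cons obtain as bs where "xs = as @ bs" "insort z xs = as @ z # bs" "\<forall>b\<in>set bs. z \<le> b" by auto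
    then have "x # xs = (x#as) @ bs \<and> insort z (x#xs) = (x#as) @ z # bs \<and> (\<forall>b\<in>set bs. z \<le> b)"
      using False by auto
    then show ?thesis by blast
  qed
qed

lemma large_insert: assumes "large a S" shows "large a (insert z S)"
proof (cases "z \<in> S")
  case True then show ?thesis using assms by (simp add: insert_absorb)
next
  case False
  have fin: "finite S" using assms large_def by auto
  let ?xs = "sorted_list_of_set S"
  have e: "sorted_list_of_set (insert z S) = insort z ?xs"
    using fin False by (simp add: sorted_list_of_set_insert)
  obtain as bs where ab: "?xs = as @ bs" "insort z ?xs = as @ z # bs" "\<forall>b\<in>set bs. z \<le> b"
    using insort_split[of ?xs z] by auto
  have sb: "sorted bs" using sorted_sorted_list_of_set[of S] ab(1) by (simp add: sorted_append)
  have "foldl fund (foldl fund a as) bs = []" using assms ab(1) unfolding large_def by simp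
  then have "foldl fund (foldl fund a as) (z # bs) = []" using prepend sb ab(3) by blast
  then show ?thesis using e ab fin unfolding large_def by simp
qed

lemma large_mono: assumes "finite Y" "X \<subseteq> Y" "large a X" shows "large a Y"
proof -
  have "finite (Y - X)" using assms by simp
  then have "large a (X \<union> (Y - X))"
  proof (induction rule: finite_induct)
    case empty then show ?case using assms by simp
  next
    case (insert z F) then show ?case by (metis Un_insert_right large_insert)
  qed
  moreover have "X \<union> (Y - X) = Y" using assms by auto
  ultimately show ?thesis by simp
qed

lemma large1_iff: assumes "finite X" "X \<noteq> {}" shows "large [1] X \<longleftrightarrow> Min X + 1 \<le> card X"
proof -
  have f1: "fund [1] (Min X) = replicate (Min X) 0" by simp
  have "large [1] X \<longleftrightarrow> large (replicate (Min X) 0) (X - {Min X})"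
    using large_Min[OF assms, of "[1]"] unfolding f1 .
  also have "\<dots> \<longleftrightarrow> foldl fund (replicate (Min X) 0) (sorted_list_of_set (X - {Min X})) = []"
    using assms(1) unfolding large_def by simp
  also have "\<dots> \<longleftrightarrow> Min X \<le> card (X - {Min X})" by (simp only: large1_list length_sorted_list_of_set replicate_empty) arith
  finally have 1: "large [1] X \<longleftrightarrow> Min X \<le> card (X - {Min X})" .
  have 2: "card (X - {Min X}) = card X - 1" using assms by (simp add: Min_in)
  have 3: "0 < card X" using assms(1,2) card_gt_0_iff by blast
  show ?thesis using 1 2 3 by linarith
qed

lemma weaken_set: assumes "large [b] X" "a \<le> b" "\<forall>x\<in>X. 1 \<le> x" shows "large [a] X"
proof -
  have f: "finite X" using assms(1) large_def by auto
  have "foldl fund [b] (sorted_list_of_set X) = []" using assms(1) large_def by auto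
  from weaken[OF this assms(2)] f assms(3) show ?thesis unfolding large_def by simp
qed

lemma chunks_set: assumes "large (replicate j e) Y"
  shows "\<exists>Ks. length Ks = j \<and> (\<forall>K\<in>set Ks. finite K \<and> K \<subseteq> Y \<and> large [e] K)
     \<and> sorted_wrt (\<lambda>A B. \<forall>a\<in>A. \<forall>b\<in>B. a < b) Ks"
proof -
  have fin: "finite Y" using assms large_def by auto
  let ?xs = "sorted_list_of_set Y"
  obtain yss zs where yz: "?xs = concat yss @ zs" "length yss = j" "\<forall>ys\<in>set yss. foldl fund [e] ys = []"
    using chunks_list[of j e "[]" ?xs] assms unfolding large_def by auto
  have "sorted_wrt (<) (concat yss @ zs)" using yz(1) strict_sorted_list_of_set[of Y] by simp
  then have ss: "sorted_wrt (<) (concat yss)" by (simp add: sorted_wrt_append)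
  then have ss2: "\<forall>ys\<in>set yss. sorted_wrt (<) ys"
    and ord: "sorted_wrt (\<lambda>xs ys. \<forall>x\<in>set xs. \<forall>y\<in>set ys. x < y) yss"
    by (auto simp: sorted_wrt_concat_iff)
  have "set (concat yss @ zs) = Y" using yz(1) fin set_sorted_list_of_set[of Y] by simp
  then have sub: "\<forall>ys\<in>set yss. set ys \<subseteq> Y" by auto
  show ?thesis
  proof (intro exI[of _ "map set yss"] conjI)
    show "length (map set yss) = j" using yz by simp
    show "\<forall>K\<in>set (map set yss). finite K \<and> K \<subseteq> Y \<and> large [e] K"
      using yz(3) ss2 sub by (auto simp: large_def ssl_set)
    show "sorted_wrt (\<lambda>A B. \<forall>a\<in>A. \<forall>b\<in>B. a < b) (map set yss)"
      using ord by (simp add: sorted_wrt_map)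
  qed
qed

lemma concat_set:
  assumes fin: "\<forall>P\<in>set Ps. finite P \<and> large [e] P"
    and ord: "sorted_wrt (\<lambda>A B. \<forall>a\<in>A. \<forall>b\<in>B. a < b) Ps"
    and len: "w \<le> length Ps"
    and wl: "\<forall>P\<in>set Ps. \<forall>x\<in>P. w < x"
  shows "large [Suc e] (insert w (\<Union>(set Ps)))"
proof -
  let ?yss = "map sorted_list_of_set Ps"
  have s1: "\<forall>ys\<in>set ?yss. sorted_wrt (<) ys" using fin by auto
  have s2: "sorted_wrt (\<lambda>xs ys. \<forall>x\<in>set xs. \<forall>y\<in>set ys. x < y) ?yss"
    using ord fin by (auto simp: sorted_wrt_map elim!: sorted_wrt_mono_rel[rotated])
  have sc: "sorted_wrt (<) (concat ?yss)" using s1 s2 by (simp add: sorted_wrt_concat_iff)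
  have sc2: "sorted_wrt (<) (w # concat ?yss)" using sc wl fin by auto
  have st: "set (w # concat ?yss) = insert w (\<Union>(set Ps))" using fin by auto
  have e: "sorted_list_of_set (insert w (\<Union>(set Ps))) = w # concat ?yss"
    by (metis ssl_set[OF sc2] st)
  have "foldl fund (replicate w e) (concat ?yss) = []"
    using cat_list[of ?yss w e] sc len fin unfolding large_def
    by (auto simp: strict_sorted_iff)
  then show ?thesis using e fin unfolding large_def by simp
qed



lemma es_sub: "exp_sparse X \<Longrightarrow> Y \<subseteq> X \<Longrightarrow> exp_sparse Y"
  unfolding exp_sparse_def by blast

lemma es_lt: "exp_sparse X \<Longrightarrow> x \<in> X \<Longrightarrow> y \<in> X \<Longrightarrow> x < y \<Longrightarrow> 4 ^ x < y"
  unfolding exp_sparse_def by blast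

lemma es_ge3: "exp_sparse X \<Longrightarrow> x \<in> X \<Longrightarrow> 3 \<le> x"
  unfolding exp_sparse_def by blast

lemma four_pow_lin: "4 * k + 2 \<le> 3 * (4::nat) ^ k"
proof (induction k)
  case 0 then show ?case by simp
next
  case (Suc k)
  have "(1::nat) \<le> 4 ^ k" by simp
  then show ?case using Suc by simp
qed

lemma four_pow_sq: "2 * k * k \<le> (4::nat) ^ k"
proof (induction k)
  case 0 then show ?case by simp
next
  case (Suc k)
  have a: "2 * Suc k * Suc k = 2 * k * k + 4 * k + 2" by (simp add: algebra_simps)
  then show ?case using Suc four_pow_lin[of k] by simp
qed

lemma num_bound: assumes "(4::nat) ^ C < m" "4 ^ w < m" shows "C * (2 * w) \<le> m" "C * w \<le> m"
proof -
  let ?k = "max C w"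
  have "(4::nat) ^ ?k < m" using assms by (simp add: max_def)
  moreover have "C * (2 * w) \<le> 2 * ?k * ?k"
  proof -
    have "C * w \<le> ?k * ?k" by (intro mult_le_mono) auto
    then show ?thesis by simp
  qed
  ultimately show "C * (2 * w) \<le> m" using four_pow_sq[of ?k] by linarith
  then show "C * w \<le> m" by simp
qed

lemma pig: assumes "finite I" "finite S" "S \<noteq> {}" "g ` I \<subseteq> S"
  shows "\<exists>c\<in>S. card I \<le> card S * card {i\<in>I. g i = c}"
proof (rule ccontr)
  assume "\<not> ?thesis"
  then have lt: "\<forall>c\<in>S. card S * card {i\<in>I. g i = c} < card I" by auto
  have "I = (\<Union>c\<in>S. {i\<in>I. g i = c})" using assms(4) by auto
  then have "card I \<le> (\<Sum>c\<in>S. card {i\<in>I. g i = c})" by (metis card_UN_le assms(2))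
  then have "card S * card I \<le> card S * (\<Sum>c\<in>S. card {i\<in>I. g i = c})"
    by (rule mult_le_mono2)
  also have "\<dots> = (\<Sum>c\<in>S. card S * card {i\<in>I. g i = c})"
    by (simp add: sum_distrib_left)
  also have "\<dots> < (\<Sum>c\<in>S. card I)" by (rule sum_strict_mono[OF assms(2,3)]) (use lt in blast)
  also have "\<dots> = card S * card I" by simp
  finally show False by simp
qed

lemma ord_nth: "sorted_wrt (\<lambda>A B. \<forall>a\<in>A. \<forall>b\<in>B. (a::nat) < b) Ks \<Longrightarrow> i < j \<Longrightarrow> j < length Ks
  \<Longrightarrow> a \<in> Ks ! i \<Longrightarrow> b \<in> Ks ! j \<Longrightarrow> a < b"
  unfolding sorted_wrt_iff_nth_less by blast

lemma large_single_nonempty: assumes "1 \<le> j" "large [j] (insert 1 B)" shows "B \<noteq> {}"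
proof
  assume "B = {}"
  then have "large [j] {1}" using assms by simp
  moreover have "sorted_list_of_set {1::nat} = [1]" by simp
  moreover have "fund [j] 1 = [j - 1]" using assms(1) by (cases j) auto
  ultimately show False unfolding large_def by simp
qed

lemma large0: assumes "finite S" "S \<noteq> {}" shows "large [0] S"
proof -
  have "large [] (S - {Min S})" using assms unfolding large_def by simp
  then show ?thesis using large_Min[OF assms, of "[0]"] by (simp only: fund.simps)
qed



definition good :: "nat \<Rightarrow> nat set \<Rightarrow> (nat \<Rightarrow> 'b) \<Rightarrow> 'b \<Rightarrow> bool" where
  "good j M f c \<longleftrightarrow> (\<forall>w. 4 ^ w < Min M \<longrightarrow> large [j] (insert w {x\<in>M. f x = c}))"

lemma pow_lt: assumes "4 ^ w < (m::nat)" shows "w < m"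
proof -
  have "w < 2 ^ w" by (rule less_exp)
  also have "(2::nat) ^ w \<le> 4 ^ w" by (rule power_mono) auto
  finally show ?thesis using assms by linarith
qed

lemma G1: assumes "finite M" "exp_sparse M" "large [1] M" "4 ^ card (f ` M) < Min M"
  shows "\<exists>c\<in>f ` M. good 1 M f c"
proof -
  have ne: "M \<noteq> {}" using large_nonempty[OF assms(3)] by simp
  let ?m = "Min M" and ?C = "card (f ` M)"
  have cm: "?m + 1 \<le> card M" using large1_iff[OF assms(1) ne] assms(3) by simp
  have fS: "finite (f ` M)" using assms(1) by simp
  have neS: "f ` M \<noteq> {}" using ne by simp
  have C0: "0 < ?C" using fS neS card_gt_0_iff by blast
  obtain c where c: "c \<in> f ` M" "card M \<le> ?C * card {x\<in>M. f x = c}"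
    using pig[OF assms(1) fS neS, of f] by blast
  have "good 1 M f c" unfolding good_def
  proof (intro allI impI)
    fix w assume w: "4 ^ w < ?m"
    let ?A = "{x\<in>M. f x = c}"
    have "?C * w \<le> ?m" using num_bound(2)[OF assms(4) w] .
    then have "?C * w < ?C * card ?A" using cm c(2) by linarith
    then have wA: "w < card ?A" using C0 by (meson mult_less_cancel1)
    have wm: "w < ?m" using pow_lt[OF w] .
    have lt: "\<forall>x\<in>?A. w < x"
    proof
      fix x assume "x \<in> ?A"
      then have "?m \<le> x" using Min_le[OF assms(1)] by simp
      then show "w < x" using wm by linarith
    qed
    have finA: "finite ?A" using assms(1) by simp
    have Min_eq: "Min (insert w ?A) = w" proof (rule Min_eqI)
      show "finite (insert w ?A)" using finA by simp
      show "w \<in> insert w ?A" by simp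
      fix y assume "y \<in> insert w ?A" then show "w \<le> y" using lt by fastforce
    qed
    have card_eq: "card (insert w ?A) = card ?A + 1" using lt finA by (metis Suc_eq_plus1 card_insert_disjoint less_irrefl)
    have "Min (insert w ?A) + 1 \<le> card (insert w ?A)" using Min_eq card_eq wA by simp
    then show "large [1] (insert w ?A)" using large1_iff[of "insert w ?A"] finA by simp
  qed
  then show ?thesis using c(1) by blast
qed

lemma Gstep:
  assumes j1: "1 \<le> j"
    and IH: "\<And>K. finite K \<Longrightarrow> exp_sparse K \<Longrightarrow> large [j] K \<Longrightarrow> 4 ^ card (f ` K) < Min K \<Longrightarrow> \<exists>c\<in>f ` K. good j K f c"
    and fin: "finite M" and es: "exp_sparse M" and lg: "large [Suc j] M" and cb: "4 ^ card (f ` M) < Min M"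
  shows "\<exists>c\<in>f ` M. good (Suc j) M f c"
proof -
  have ne: "M \<noteq> {}" using large_nonempty[OF lg] by simp
  define m where "m = Min M"
  have mM: "m \<in> M" unfolding m_def using fin ne by (rule Min_in)
  have m3: "3 \<le> m" using es_ge3[OF es mM] .
  have a: "large (fund [Suc j] (Min M)) (M - {Min M})" by (rule iffD1[OF large_Min[OF fin ne] lg])
  have b: "fund [Suc j] (Min M) = replicate (Min M) j" by simp
  from a have l2: "large (replicate m j) (M - {m})" unfolding b m_def .
  obtain Ks where Ks: "length Ks = m" "\<forall>K\<in>set Ks. finite K \<and> K \<subseteq> M - {m} \<and> large [j] K"
      "sorted_wrt (\<lambda>A B. \<forall>a\<in>A. \<forall>b\<in>B. a < b) Ks"
    using chunks_set[OF l2] by blast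
  let ?C = "card (f ` M)"
  have fS: "finite (f ` M)" using fin by simp
  have neS: "f ` M \<noteq> {}" using ne by simp
  have C0: "0 < ?C" using fS neS card_gt_0_iff by blast
  have Kmem: "Ks ! i \<in> set Ks" if "i < m" for i using that Ks(1) by simp
  have Kfin: "finite (Ks ! i)" if "i < m" for i using Ks(2) Kmem[OF that] by blast
  have Ksub: "Ks ! i \<subseteq> M - {m}" if "i < m" for i using Ks(2) Kmem[OF that] by blast
  have Klg: "large [j] (Ks ! i)" if "i < m" for i using Ks(2) Kmem[OF that] by blast
  have Kne: "Ks ! i \<noteq> {}" if "i < m" for i using large_nonempty[OF Klg[OF that]] by simp
  have gtm: "m < x" if "x \<in> M - {m}" for x
  proof -
    have "m \<le> x" using that Min_le[OF fin] m_def by simp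
    then show ?thesis using that by simp
  qed
  have KminM: "Min (Ks ! i) \<in> M - {m}" if "i < m" for i
    using Ksub[OF that] Min_in[OF Kfin[OF that] Kne[OF that]] by blast
  have Kmin: "4 ^ m < Min (Ks ! i)" if "i < m" for i
    using es_lt[OF es mM _ gtm[OF KminM[OF that]]] KminM[OF that] by blast
  have four_m: "4 < (4::nat) ^ m"
  proof -
    have "(4::nat) ^ 1 < 4 ^ m" by (rule power_strict_increasing) (use m3 in simp_all)
    then show ?thesis by simp
  qed
  have cm: "?C < m" using cb m_def pow_lt by simp
  have Kcb: "4 ^ card (f ` (Ks ! i)) < Min (Ks ! i)" if "i < m" for i
  proof -
    have "card (f ` (Ks ! i)) \<le> ?C" using Ksub[OF that] fS by (intro card_mono) auto
    then have "(4::nat) ^ card (f ` (Ks ! i)) \<le> 4 ^ ?C" by (intro power_increasing) auto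
    also have "\<dots> < m" using cb m_def by simp
    also have "m < 4 ^ m"
    proof -
      have "m < 2 ^ m" by (rule less_exp)
      also have "(2::nat) ^ m \<le> 4 ^ m" by (rule power_mono) simp_all
      finally show ?thesis .
    qed
    also have "\<dots> < Min (Ks ! i)" using Kmin[OF that] .
    finally show ?thesis .
  qed
  have Kes: "exp_sparse (Ks ! i)" if "i < m" for i using es_sub[OF es] Ksub[OF that] by blast
  have "\<forall>i\<in>{..<m}. \<exists>c. c \<in> f ` (Ks ! i) \<and> good j (Ks ! i) f c"
  proof
    fix i assume "i \<in> {..<m}"
    then have i: "i < m" by simp
    show "\<exists>c. c \<in> f ` (Ks ! i) \<and> good j (Ks ! i) f c"
      using IH[OF Kfin[OF i] Kes[OF i] Klg[OF i] Kcb[OF i]] by blast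
  qed
  from bchoice[OF this] obtain cf where cf: "\<forall>i\<in>{..<m}. cf i \<in> f ` (Ks ! i) \<and> good j (Ks ! i) f (cf i)"
    by blast
  have cfS: "cf ` {..<m} \<subseteq> f ` M"
  proof
    fix c assume "c \<in> cf ` {..<m}"
    then obtain i where i: "i < m" "c = cf i" by blast
    then have "c \<in> f ` (Ks ! i)" using cf by blast
    then show "c \<in> f ` M" using Ksub[OF i(1)] by blast
  qed
  obtain cs where cs: "cs \<in> f ` M" "card {..<m} \<le> ?C * card {i\<in>{..<m}. cf i = cs}"
    using pig[OF _ fS neS cfS] by blast
  define J where "J = {i\<in>{..<m}. cf i = cs}"
  have finJ: "finite J" unfolding J_def by simp
  have "good (Suc j) M f cs" unfolding good_def
  proof (intro allI impI)
    fix w assume w: "4 ^ w < Min M"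
    have wm: "w < m" using pow_lt w m_def by simp
    have "?C * (2 * w) \<le> m" using num_bound(1)[OF cb w] m_def by simp
    also have "m \<le> ?C * card J" using cs(2) J_def by simp
    finally have wJ: "2 * w \<le> card J" using C0 by simp
    define js where "js = sorted_list_of_set J"
    have js_len: "length js = card J" unfolding js_def by simp
    have js_sort: "sorted_wrt (<) js" unfolding js_def by (rule strict_sorted_list_of_set)
    have js_set: "set js = J" unfolding js_def using finJ by simp
    have jsJ: "js ! p \<in> J" if "p < length js" for p using that js_set nth_mem by blast
    have js_m: "js ! p < m" if "p < length js" for p using jsJ[OF that] J_def by simp
    have js_c: "cf (js ! p) = cs" if "p < length js" for p using jsJ[OF that] J_def by simp
    have js_lt: "js ! p < js ! q" if "p < q" "q < length js" for p q
      using js_sort that sorted_wrt_iff_nth_less by blast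
    define B where "B i = {x \<in> Ks ! i. f x = cs}" for i
    have Bgood: "good j (Ks ! (js ! p)) f cs" if "p < length js" for p
      using cf js_m[OF that] js_c[OF that] by fastforce
    have Bne: "B (js ! p) \<noteq> {}" if "p < length js" for p
    proof -
      have "4 ^ 1 < Min (Ks ! (js ! p))" using four_m Kmin[OF js_m[OF that]] by simp
      then have "large [j] (insert 1 (B (js ! p)))" using Bgood[OF that] unfolding good_def B_def by blast
      then show ?thesis using large_single_nonempty[OF j1] by blast
    qed
    have Bfin: "finite (B i)" if "i < m" for i using Kfin[OF that] unfolding B_def by simp
    define an where "an r = Min (B (js ! (2 * r)))" for r
    define P where "P r = insert (an r) (B (js ! (2 * r + 1)))" for r
    have idx: "2 * r + 1 < length js" if "r < w" for r using that wJ js_len by linarith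
    have an_in: "an r \<in> B (js ! (2 * r))" if "r < w" for r
      unfolding an_def using Min_in[OF Bfin[OF js_m] Bne] idx[OF that] by simp
    have an_K: "an r \<in> Ks ! (js ! (2 * r))" if "r < w" for r using an_in[OF that] B_def by simp
    have an_c: "f (an r) = cs" if "r < w" for r using an_in[OF that] B_def by simp
    have Psub: "P r \<subseteq> Ks ! (js ! (2 * r)) \<union> Ks ! (js ! (2 * r + 1))" if "r < w" for r
      using an_K[OF that] unfolding P_def B_def by blast
    have PsubA: "P r \<subseteq> {x\<in>M. f x = cs}" if "r < w" for r
    proof -
      have "js ! (2 * r) < m" "js ! (2 * r + 1) < m" using js_m idx[OF that] by auto
      then show ?thesis using an_K[OF that] an_c[OF that] Ksub[of "js ! (2 * r)"] Ksub[of "js ! (2 * r + 1)"] unfolding P_def B_def by blast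
    qed
    have Plg: "large [j] (P r)" if "r < w" for r
    proof -
      have i1: "js ! (2 * r + 1) < m" using js_m idx[OF that] by simp
      have i0: "js ! (2 * r) < js ! (2 * r + 1)" using js_lt idx[OF that] by simp
      have "an r < Min (Ks ! (js ! (2 * r + 1)))"
        using ord_nth[OF Ks(3) i0 _ an_K[OF that] Min_in[OF Kfin[OF i1] Kne[OF i1]]] i1 Ks(1) by simp
      moreover have "an r \<in> M"
      proof -
        have "js ! (2 * r) < m" using js_m idx[OF that] by simp
        then show ?thesis using an_K[OF that] Ksub[of "js ! (2 * r)"] by blast
      qed
      moreover have "Min (Ks ! (js ! (2 * r + 1))) \<in> M" using KminM[OF i1] by blast
      ultimately have "4 ^ an r < Min (Ks ! (js ! (2 * r + 1)))" using es_lt[OF es] by blast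
      then show ?thesis using Bgood[OF idx[OF that]] unfolding good_def P_def B_def by blast
    qed
    have Pfin: "finite (P r)" if "r < w" for r
    proof -
      have "js ! (2 * r + 1) < m" using js_m idx[OF that] by simp
      then show ?thesis using Bfin[of "js ! (2 * r + 1)"] unfolding P_def by simp
    qed
    define Ps where "Ps = map P [0..<w]"
    have c1: "\<forall>Q\<in>set Ps. finite Q \<and> large [j] Q" unfolding Ps_def using Pfin Plg by auto
    have c2: "sorted_wrt (\<lambda>A B. \<forall>a\<in>A. \<forall>b\<in>B. a < b) Ps"
      unfolding Ps_def sorted_wrt_map
    proof (rule sorted_wrt_mono_rel[OF _ sorted_wrt_upt])
      fix r r' assume rr: "r \<in> set [0..<w]" "r' \<in> set [0..<w]" "r < r'"
      have rw: "r < w" "r' < w" using rr by auto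
      have o1: "js ! (2 * r) < js ! (2 * r')" using js_lt idx[OF rw(2)] rr(3) by simp
      have o2: "js ! (2 * r) < js ! (2 * r' + 1)" using js_lt idx[OF rw(2)] rr(3) by simp
      have o3: "js ! (2 * r + 1) < js ! (2 * r')" using js_lt idx[OF rw(2)] rr(3) by simp
      have o4: "js ! (2 * r + 1) < js ! (2 * r' + 1)" using js_lt idx[OF rw(2)] rr(3) by simp
      have l1: "js ! (2 * r') < length Ks" "js ! (2 * r' + 1) < length Ks"
        using js_m idx[OF rw(2)] Ks(1) by auto
      show "\<forall>a\<in>P r. \<forall>b\<in>P r'. a < b"
      proof (intro ballI)
        fix a b assume ab: "a \<in> P r" "b \<in> P r'"
        from Psub[OF rw(1)] ab(1) Psub[OF rw(2)] ab(2)
        show "a < b" using ord_nth[OF Ks(3) o1 l1(1)] ord_nth[OF Ks(3) o2 l1(2)]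
            ord_nth[OF Ks(3) o3 l1(1)] ord_nth[OF Ks(3) o4 l1(2)] by blast
      qed
    qed
    have c3: "w \<le> length Ps" unfolding Ps_def by simp
    have c4: "\<forall>Q\<in>set Ps. \<forall>x\<in>Q. w < x"
    proof (intro ballI)
      fix Q x assume "Q \<in> set Ps" "x \<in> Q"
      then obtain r where r: "r < w" "x \<in> P r" unfolding Ps_def by auto
      have "js ! (2 * r) < m" "js ! (2 * r + 1) < m" using js_m idx[OF r(1)] by auto
      then have "x \<in> M - {m}" using Psub[OF r(1)] r(2) Ksub[of "js ! (2 * r)"] Ksub[of "js ! (2 * r + 1)"] by blast
      then show "w < x" using gtm wm by fastforce
    qed
    have L: "large [Suc j] (insert w (\<Union>(set Ps)))" by (rule concat_set[OF c1 c2 c3 c4])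
    have sub: "insert w (\<Union>(set Ps)) \<subseteq> insert w {x\<in>M. f x = cs}"
    proof
      fix x assume "x \<in> insert w (\<Union>(set Ps))"
      then have "x = w \<or> (\<exists>r<w. x \<in> P r)" unfolding Ps_def by auto
      then show "x \<in> insert w {x\<in>M. f x = cs}" using PsubA by blast
    qed
    show "large [Suc j] (insert w {x\<in>M. f x = cs})"
      by (rule large_mono[OF _ sub L]) (use fin in simp)
  qed
  then show ?thesis using cs(1) by blast
qed



lemma G: "1 \<le> j \<Longrightarrow> finite M \<Longrightarrow> exp_sparse M \<Longrightarrow> large [j] M \<Longrightarrow> 4 ^ card (f ` M) < Min M
  \<Longrightarrow> \<exists>c\<in>f ` M. good j M f c"
proof (induction j arbitrary: M rule: nat_induct_at_least)
  case base then show ?case using G1 by blast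
next
  case (Suc j) show ?case by (rule Gstep[OF Suc.hyps(1) Suc.IH Suc.prems])
qed

lemma chunk_facts:
  assumes fin: "finite T" and es: "exp_sparse T" and lg: "large [Suc a] T"
  shows "\<exists>Ks. length Ks = Min T \<and> sorted_wrt (\<lambda>A B. \<forall>a\<in>A. \<forall>b\<in>B. a < b) Ks \<and>
    (\<forall>i<Min T. finite (Ks ! i) \<and> Ks ! i \<subseteq> T - {Min T} \<and> large [a] (Ks ! i) \<and> Ks ! i \<noteq> {}
       \<and> Min (Ks ! i) \<in> T \<and> 4 ^ Min T < Min (Ks ! i))"
proof -
  have ne: "T \<noteq> {}" using large_nonempty[OF lg] by simp
  define t where "t = Min T"
  have tT: "t \<in> T" unfolding t_def using fin ne by (rule Min_in)
  have a1: "large (fund [Suc a] (Min T)) (T - {Min T})" by (rule iffD1[OF large_Min[OF fin ne] lg])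
  have b: "fund [Suc a] (Min T) = replicate (Min T) a" by simp
  from a1 have l2: "large (replicate t a) (T - {t})" unfolding b t_def .
  obtain Ks where Ks: "length Ks = t" "\<forall>K\<in>set Ks. finite K \<and> K \<subseteq> T - {t} \<and> large [a] K"
      "sorted_wrt (\<lambda>A B. \<forall>a\<in>A. \<forall>b\<in>B. a < b) Ks"
    using chunks_set[OF l2] by blast
  have "finite (Ks ! i) \<and> Ks ! i \<subseteq> T - {t} \<and> large [a] (Ks ! i) \<and> Ks ! i \<noteq> {}
       \<and> Min (Ks ! i) \<in> T \<and> 4 ^ t < Min (Ks ! i)" if i: "i < t" for i
  proof -
    have mem: "Ks ! i \<in> set Ks" using i Ks(1) by simp
    have f1: "finite (Ks ! i)" and s1: "Ks ! i \<subseteq> T - {t}" and l1: "large [a] (Ks ! i)"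
      using Ks(2) mem by blast+
    have n1: "Ks ! i \<noteq> {}" using large_nonempty[OF l1] by simp
    have mi: "Min (Ks ! i) \<in> T - {t}" using s1 Min_in[OF f1 n1] by blast
    have "t \<le> Min (Ks ! i)" using mi Min_le[OF fin] t_def by simp
    then have "t < Min (Ks ! i)" using mi by simp
    then have "4 ^ t < Min (Ks ! i)" using es_lt[OF es tT] mi by blast
    then show ?thesis using f1 s1 l1 n1 mi by blast
  qed
  then have "\<forall>i<t. finite (Ks ! i) \<and> Ks ! i \<subseteq> T - {t} \<and> large [a] (Ks ! i) \<and> Ks ! i \<noteq> {}
       \<and> Min (Ks ! i) \<in> T \<and> 4 ^ t < Min (Ks ! i)" by blast
  note X = this
  have "\<exists>Ks. length Ks = t \<and> sorted_wrt (\<lambda>A B. \<forall>a\<in>A. \<forall>b\<in>B. a < b) Ks \<and>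
    (\<forall>i<t. finite (Ks ! i) \<and> Ks ! i \<subseteq> T - {t} \<and> large [a] (Ks ! i) \<and> Ks ! i \<noteq> {}
       \<and> Min (Ks ! i) \<in> T \<and> 4 ^ t < Min (Ks ! i))"
    by (rule exI[of _ Ks], intro conjI, fact Ks(1), fact Ks(3), fact X)
  then show ?thesis unfolding t_def .
qed

lemma PL1: assumes fin: "finite T" and es: "exp_sparse T" and lg: "large [Suc a] T" and cb: "card (f ` T) \<le> Min T"
  shows "\<exists>c. large [a] {x\<in>T. f x = c}"
proof -
  have ne: "T \<noteq> {}" using large_nonempty[OF lg] by simp
  define t where "t = Min T"
  have tT: "t \<in> T" unfolding t_def using fin ne by (rule Min_in)
  show ?thesis
  proof (cases "a = 0")
    case True
    have "{x\<in>T. f x = f t} \<noteq> {}" using tT by blast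
    moreover have "finite {x\<in>T. f x = f t}" using fin by simp
    ultimately show ?thesis using large0 True by blast
  next
    case False
    then have a1: "1 \<le> a" by simp
    obtain Ks where Ks: "length Ks = t" "sorted_wrt (\<lambda>A B. \<forall>a\<in>A. \<forall>b\<in>B. a < b) Ks"
      "\<forall>i<t. finite (Ks ! i) \<and> Ks ! i \<subseteq> T - {t} \<and> large [a] (Ks ! i) \<and> Ks ! i \<noteq> {}
       \<and> Min (Ks ! i) \<in> T \<and> 4 ^ t < Min (Ks ! i)"
      using chunk_facts[OF fin es lg] t_def by blast
    have fS: "finite (f ` T)" using fin by simp
    have "\<forall>i\<in>{..<t}. \<exists>c. c \<in> f ` (Ks ! i) \<and> good a (Ks ! i) f c"
    proof
      fix i assume "i \<in> {..<t}"
      then have i: "i < t" by simp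
      have K: "finite (Ks ! i)" "Ks ! i \<subseteq> T - {t}" "large [a] (Ks ! i)" "4 ^ t < Min (Ks ! i)"
        using Ks(3) i by blast+
      have "card (f ` (Ks ! i)) \<le> card (f ` T)" using K(2) fS by (intro card_mono) auto
      then have "card (f ` (Ks ! i)) \<le> t" using cb t_def by simp
      then have "(4::nat) ^ card (f ` (Ks ! i)) \<le> 4 ^ t" by (intro power_increasing) auto
      then have "4 ^ card (f ` (Ks ! i)) < Min (Ks ! i)" using K(4) by linarith
      moreover have "exp_sparse (Ks ! i)" using es_sub[OF es] K(2) by blast
      ultimately show "\<exists>c. c \<in> f ` (Ks ! i) \<and> good a (Ks ! i) f c"
        using G[OF a1 K(1) _ K(3)] by blast
    qed
    from bchoice[OF this] obtain cf where cf: "\<forall>i\<in>{..<t}. cf i \<in> f ` (Ks ! i) \<and> good a (Ks ! i) f (cf i)"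
      by blast
    define h where "h p = (if p = 0 then f t else cf (p - 1))" for p
    have hS: "h ` {..t} \<subseteq> f ` T"
    proof
      fix c assume "c \<in> h ` {..t}"
      then obtain p where p: "p \<le> t" "c = h p" by blast
      show "c \<in> f ` T"
      proof (cases "p = 0")
        case True then show ?thesis using p tT h_def by simp
      next
        case False
        then have "p - 1 < t" using p by simp
        then have "c \<in> f ` (Ks ! (p - 1))" using cf p False h_def by simp
        moreover have "Ks ! (p - 1) \<subseteq> T" using Ks(3) \<open>p - 1 < t\<close> by blast
        ultimately show ?thesis by blast
      qed
    qed
    have "\<not> inj_on h {..t}"
    proof
      assume "inj_on h {..t}"
      from card_inj_on_le[OF this hS fS] have "Suc t \<le> card (f ` T)" by simp
      then show False using cb t_def by simp
    qed
    then obtain p q where pq: "p \<le> t" "q \<le> t" "p \<noteq> q" "h p = h q" unfolding inj_on_def by auto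
    obtain p' q' where pq': "p' < q'" "q' \<le> t" "h p' = h q'"
    proof (cases "p < q")
      case True then show ?thesis using that pq by blast
    next
      case False then have "q < p" using pq(3) by simp
      then show ?thesis using that[of q p] pq by simp
    qed
    define i where "i = q' - 1"
    have i: "i < t" using pq' i_def by simp
    have q'i: "q' = Suc i" using pq' i_def by simp
    define c where "c = cf i"
    have hq: "h q' = c" using q'i h_def c_def by simp
    have Ki: "finite (Ks ! i)" "Ks ! i \<subseteq> T - {t}" "Ks ! i \<noteq> {}" "Min (Ks ! i) \<in> T" "4 ^ t < Min (Ks ! i)"
      using Ks(3) i by blast+
    have gi: "good a (Ks ! i) f c" using cf i c_def by simp
    obtain z where z: "z \<in> T" "f z = c" "z < Min (Ks ! i)"
    proof (cases "p' = 0")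
      case True
      then have "f t = c" using pq'(3) hq h_def by simp
      moreover have "t < Min (Ks ! i)"
      proof -
        have mi: "Min (Ks ! i) \<in> T - {t}" using Ki(2) Min_in[OF Ki(1) Ki(3)] by blast
        then have "t \<le> Min (Ks ! i)" using Min_le[OF fin] t_def by simp
        then show ?thesis using mi by simp
      qed
      ultimately show ?thesis using that tT by blast
    next
      case False
      define i' where "i' = p' - 1"
      have ii: "i' < i" using False pq' i_def i'_def by simp
      have i't: "i' < t" using ii i by simp
      have ci': "cf i' = c" using pq'(3) hq h_def i'_def False by simp
      have Ki': "finite (Ks ! i')" "Ks ! i' \<subseteq> T - {t}" "4 ^ t < Min (Ks ! i')"
        using Ks(3) i't by blast+
      have gi': "good a (Ks ! i') f c" using cf i't ci' by fastforce
      have t3: "3 \<le> t" using es_ge3[OF es tT] .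
      have "(4::nat) ^ 1 < 4 ^ t" by (rule power_strict_increasing) (use t3 in simp_all)
      then have "4 ^ 1 < Min (Ks ! i')" using Ki'(3) by linarith
      then have "large [a] (insert 1 {x \<in> Ks ! i'. f x = c})" using gi' unfolding good_def by blast
      then have Bne: "{x \<in> Ks ! i'. f x = c} \<noteq> {}" using large_single_nonempty[OF a1] by blast
      define z where "z = Min {x \<in> Ks ! i'. f x = c}"
      have zB: "z \<in> {x \<in> Ks ! i'. f x = c}" unfolding z_def by (rule Min_in) (use Ki'(1) Bne in simp_all)
      have "z < Min (Ks ! i)"
        using ord_nth[OF Ks(2) ii _ _ Min_in[OF Ki(1) Ki(3)]] i Ks(1) zB by simp
      moreover have "z \<in> T" using zB Ki'(2) by blast
      ultimately show ?thesis using that zB by blast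
    qed
    have "4 ^ z < Min (Ks ! i)" using es_lt[OF es z(1) Ki(4) z(3)] .
    then have L: "large [a] (insert z {x \<in> Ks ! i. f x = c})" using gi unfolding good_def by blast
    have sub: "insert z {x \<in> Ks ! i. f x = c} \<subseteq> {x\<in>T. f x = c}" using z Ki(2) by blast
    have "large [a] {x\<in>T. f x = c}" by (rule large_mono[OF _ sub L]) (use fin in simp)
    then show ?thesis by blast
  qed
qed



definition grp :: "ord_cnf \<Rightarrow> ord_cnf \<Rightarrow> nat set \<Rightarrow> (nat \<Rightarrow> nat \<Rightarrow> bool) \<Rightarrow> nat set list \<Rightarrow> bool" where
  "grp al be X P Gs \<longleftrightarrow> (\<forall>G\<in>set Gs. finite G \<and> G \<subseteq> X \<and> large al G)
     \<and> sorted_wrt (\<lambda>A B. \<forall>a\<in>A. \<forall>b\<in>B. a < b) Gs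
     \<and> large be (set (map Max Gs))
     \<and> sorted_wrt (\<lambda>A B. \<forall>x\<in>A. \<forall>x'\<in>A. \<forall>y\<in>B. \<forall>y'\<in>B. P x y = P x' y') Gs"

lemma grp_grouping: assumes "grp [n] be X P Gs" shows "grouping [n] be X P (length Gs) (\<lambda>i. Gs ! i)"
proof -
  have A: "\<forall>G\<in>set Gs. finite G \<and> G \<subseteq> X \<and> large [n] G" using assms grp_def by blast
  have O: "sorted_wrt (\<lambda>A B. \<forall>a\<in>A. \<forall>b\<in>B. a < b) Gs" using assms grp_def by blast
  have M: "large be (set (map Max Gs))" using assms grp_def by blast
  have H: "sorted_wrt (\<lambda>A B. \<forall>x\<in>A. \<forall>x'\<in>A. \<forall>y\<in>B. \<forall>y'\<in>B. P x y = P x' y') Gs" using assms grp_def by blast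
  have Ai: "finite (Gs ! i) \<and> Gs ! i \<subseteq> X \<and> large [n] (Gs ! i)" if "i < length Gs" for i
    using A nth_mem[OF that] by blast
  have Ne: "Gs ! i \<noteq> {}" if "i < length Gs" for i using large_nonempty Ai[OF that] by blast
  have 1: "\<forall>i<length Gs. finite (Gs ! i) \<and> Gs ! i \<subseteq> X" using Ai by blast
  have 2: "\<forall>i j. i < j \<and> j < length Gs \<longrightarrow> Max (Gs ! i) < Min (Gs ! j)"
  proof (intro allI impI)
    fix i j assume ij: "i < j \<and> j < length Gs"
    have "Max (Gs ! i) \<in> Gs ! i" using Ai Ne ij by (meson Max_in less_trans)
    moreover have "Min (Gs ! j) \<in> Gs ! j" using Ai Ne ij by (meson Min_in)
    ultimately show "Max (Gs ! i) < Min (Gs ! j)" using ord_nth[OF O] ij by blast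
  qed
  have 3: "\<forall>i<length Gs. large [n] (Gs ! i)" using Ai by blast
  have e: "(\<lambda>i. Max (Gs ! i)) ` {..<length Gs} = set (map Max Gs)"
  proof -
    have "set (map Max Gs) = Max ` set Gs" by simp
    also have "set Gs = (\<lambda>i. Gs ! i) ` {..<length Gs}" unfolding set_conv_nth by blast
    finally show ?thesis by (simp add: image_image)
  qed
  have 4: "large be ((\<lambda>i. Max (Gs ! i)) ` {..<length Gs})" using M e by simp
  have 5: "\<forall>i j. i < j \<and> j < length Gs \<longrightarrow>
        (\<forall>x\<in>Gs ! i. \<forall>x'\<in>Gs ! i. \<forall>y\<in>Gs ! j. \<forall>y'\<in>Gs ! j. P x y = P x' y')"
    using H unfolding sorted_wrt_iff_nth_less by blast
  show ?thesis unfolding grouping_def using 1 2 3 4 5 by blast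
qed

lemma ES: assumes es: "exp_sparse X" and Z: "Z \<subseteq> X" "finite Z" and y: "y \<in> X" "\<forall>z\<in>Z. z < y"
  shows "2 ^ card Z \<le> y"
proof (cases "Z = {}")
  case True then show ?thesis using es_ge3[OF es y(1)] by simp
next
  case False
  define M where "M = Max Z"
  have MZ: "M \<in> Z" unfolding M_def using Z(2) False by (rule Max_in)
  have My: "4 ^ M < y" using es_lt[OF es _ y(1)] MZ Z(1) y(2) by blast
  have M3: "3 \<le> M" using es_ge3[OF es] MZ Z(1) by blast
  have "Z \<subseteq> {0..M}" using Max_ge[OF Z(2)] M_def by auto
  then have "card Z \<le> Suc M" using card_mono[of "{0..M}" Z] by simp
  then have "(2::nat) ^ card Z \<le> 2 ^ Suc M" by (intro power_increasing) auto
  also have "\<dots> = 2 * 2 ^ M" by simp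
  also have "\<dots> \<le> 2 ^ M * 2 ^ M"
  proof -
    have "(2::nat) \<le> 2 ^ M" using M3 by (metis One_nat_def Suc_leD le_add_diff_inverse numeral_3_eq_3 power_increasing power_one_right zero_less_numeral one_le_numeral)
    then show ?thesis by simp
  qed
  also have "\<dots> = 4 ^ M" by (simp add: power_mult_distrib[symmetric])
  finally show ?thesis using My by simp
qed



lemma base:
  assumes fin: "finite X" and es: "exp_sparse X" and lg: "large [n + 6] X"
  shows "\<exists>Fs. grp [n] [1] X P Fs"
proof -
  have e6: "n + 6 = Suc (n + 5)" by simp
  have lg': "large [Suc (n + 5)] X" using lg unfolding e6 .
  obtain Ks where Ks: "length Ks = Min X" "sorted_wrt (\<lambda>A B. \<forall>a\<in>A. \<forall>b\<in>B. a < b) Ks"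
    "\<forall>i<Min X. finite (Ks ! i) \<and> Ks ! i \<subseteq> X - {Min X} \<and> large [n + 5] (Ks ! i) \<and> Ks ! i \<noteq> {}
       \<and> Min (Ks ! i) \<in> X \<and> 4 ^ Min X < Min (Ks ! i)"
    using chunk_facts[OF fin es lg'] by blast
  have neX: "X \<noteq> {}" using large_nonempty[OF lg] by simp
  have x3: "3 \<le> Min X" using es_ge3[OF es Min_in[OF fin neX]] .
  define A1 where "A1 = Ks ! 0"
  define A2 where "A2 = Ks ! 1"
  have k0: "0 < Min X" "1 < Min X" using x3 by simp_all
  have a1: "finite A1 \<and> A1 \<subseteq> X - {Min X} \<and> large [n + 5] A1 \<and> A1 \<noteq> {}"
    using Ks(3) k0(1) unfolding A1_def by blast
  have a2: "finite A2 \<and> A2 \<subseteq> X - {Min X} \<and> large [n + 5] A2 \<and> A2 \<noteq> {}"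
    using Ks(3) k0(2) unfolding A2_def by blast
  have A1: "finite A1" "A1 \<subseteq> X" "large [n + 5] A1" "A1 \<noteq> {}" using a1 by blast+
  have A2: "finite A2" "A2 \<subseteq> X" "large [n + 5] A2" "A2 \<noteq> {}" using a2 by blast+
  have A12: "\<forall>a\<in>A1. \<forall>b\<in>A2. a < b"
    using ord_nth[OF Ks(2), of 0 1] Ks(1) x3 unfolding A1_def A2_def by simp
  have ge1: "\<forall>x\<in>X. 1 \<le> x" using es_ge3[OF es] by fastforce
  have S0: "large [Suc n] A1" by (rule weaken_set[OF A1(3)]) (use ge1 A1(2) in auto)
  have R0: "large [Suc (n + 3)] A2" by (rule weaken_set[OF A2(3)]) (use ge1 A2(2) in auto)
  have esA1: "exp_sparse A1" using es_sub[OF es A1(2)] .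
  have esA2: "exp_sparse A2" using es_sub[OF es A2(2)] .
  define f0 where "f0 y = {x\<in>A1. P x y}" for y
  have "card (f0 ` A2) \<le> Min A2"
  proof -
    have "f0 ` A2 \<subseteq> Pow A1" unfolding f0_def by auto
    then have "card (f0 ` A2) \<le> card (Pow A1)" using A1(1) by (intro card_mono) auto
    also have "\<dots> = 2 ^ card A1" using card_Pow A1(1) by blast
    also have "\<dots> \<le> Min A2"
      using ES[OF es A1(2) A1(1) _ ] A12 Min_in[OF A2(1) A2(4)] A2(2) by blast
    finally show ?thesis .
  qed
  from PL1[OF A2(1) esA2 R0 this] obtain U where R'l: "large [n + 3] {y\<in>A2. f0 y = U}" by blast
  define R' where "R' = {y\<in>A2. f0 y = U}"
  have e3: "n + 3 = Suc (n + 2)" "n + 2 = Suc (n + 1)" "n + 1 = Suc n" by simp_all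
  have R'3: "large [Suc (n + 2)] R'" using R'l unfolding R'_def e3(1) .
  have R': "finite R'" "R' \<subseteq> A2" "large [Suc (n + 2)] R'" "R' \<noteq> {}"
    using A2(1) R'3 large_nonempty[OF R'l] unfolding R'_def by auto
  have "card ((\<lambda>x. x \<in> U) ` A1) \<le> Min A1"
  proof -
    have "card ((\<lambda>x. x \<in> U) ` A1) \<le> card (UNIV :: bool set)" by (rule card_mono) auto
    also have "\<dots> = 2" by simp
    also have "2 \<le> Min A1" using es_ge3[OF es] Min_in[OF A1(1) A1(4)] A1(2) by fastforce
    finally show ?thesis .
  qed
  from PL1[OF A1(1) esA1 S0 this] obtain bb where F0l: "large [n] {x\<in>A1. (x \<in> U) = bb}" by blast
  define F0 where "F0 = {x\<in>A1. (x \<in> U) = bb}"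
  have F0: "finite F0" "F0 \<subseteq> A1" "large [n] F0" "F0 \<noteq> {}"
    using A1(1) F0l large_nonempty[OF F0l] unfolding F0_def by auto
  define s where "s = Max F0"
  have sF0: "s \<in> F0" unfolding s_def using F0(1) F0(4) by (rule Max_in)
  have esR': "exp_sparse R'" using es_sub[OF esA2 R'(2)] .
  obtain Ws where Ws: "length Ws = Min R'" "sorted_wrt (\<lambda>A B. \<forall>a\<in>A. \<forall>b\<in>B. a < b) Ws"
    "\<forall>i<Min R'. finite (Ws ! i) \<and> Ws ! i \<subseteq> R' - {Min R'} \<and> large [n + 2] (Ws ! i) \<and> Ws ! i \<noteq> {}
       \<and> Min (Ws ! i) \<in> R' \<and> 4 ^ Min R' < Min (Ws ! i)"
    using chunk_facts[OF R'(1) esR' R'(3)] by blast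
  have sR': "s < Min R'" using A12 sF0 F0(2) R'(2) Min_in[OF R'(1) R'(4)] by blast
  have Wi: "finite (Ws ! i) \<and> Ws ! i \<subseteq> X \<and> large [n + 2] (Ws ! i) \<and> Ws ! i \<noteq> {} \<and> (\<forall>y\<in>Ws ! i. s < y)
     \<and> Ws ! i \<subseteq> R'" if "i < s" for i
  proof -
    have i: "i < Min R'" using that sR' by simp
    have a: "finite (Ws ! i)" "Ws ! i \<subseteq> R' - {Min R'}" "large [n + 2] (Ws ! i)" "Ws ! i \<noteq> {}"
      using Ws(3) i by blast+
    have b: "Ws ! i \<subseteq> X" using a(2) R'(2) A2(2) by blast
    have c: "\<forall>y\<in>Ws ! i. s < y" using a(2) R'(2) A12 sF0 F0(2) by blast
    show ?thesis using a b c by blast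
  qed
  have WR: "Ws ! i \<subseteq> R'" if "i < s" for i
    using Wi[OF that] by (elim conjE) assumption
  have Word: "\<forall>a\<in>Ws ! i. \<forall>b\<in>Ws ! j. a < b" if "i < j" "j < s" for i j
    using ord_nth[OF Ws(2) that(1)] that sR' Ws(1) by simp
  have esW: "exp_sparse (Ws ! i)" if "i < s" for i using es_sub[OF es] Wi[OF that] by blast
  define Wlt where "Wlt j = {x. \<exists>i<j. x \<in> Ws ! i}" for j
  define T where "T j y = {x \<in> Wlt j. P x y}" for j y
  have Wlt_fin: "finite (Wlt j)" if "j \<le> s" for j
  proof -
    have "Wlt j = (\<Union>i\<in>{..<j}. Ws ! i)" unfolding Wlt_def by blast
    then show ?thesis using Wi that by simp
  qed
  have "\<forall>j\<in>{..<s}. \<exists>Uj. large [n + 1] {y \<in> Ws ! j. T j y = Uj}"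
  proof
    fix j assume "j \<in> {..<s}"
    then have j: "j < s" by simp
    have W: "finite (Ws ! j)" "Ws ! j \<subseteq> X" "large [n + 2] (Ws ! j)" "Ws ! j \<noteq> {}"
      using Wi[OF j] by blast+
    have W3: "large [Suc (n + 1)] (Ws ! j)" using W(3) unfolding e3(2) .
    have "card (T j ` (Ws ! j)) \<le> Min (Ws ! j)"
    proof -
      have "T j ` (Ws ! j) \<subseteq> Pow (Wlt j)" unfolding T_def by auto
      then have "card (T j ` (Ws ! j)) \<le> card (Pow (Wlt j))" using Wlt_fin j by (intro card_mono) auto
      also have "\<dots> = 2 ^ card (Wlt j)" using Wlt_fin[of j] j by (simp add: card_Pow)
      also have "\<dots> \<le> Min (Ws ! j)"
      proof (rule ES[OF es])
        show "Wlt j \<subseteq> X"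
        proof
          fix x assume "x \<in> Wlt j"
          then obtain i where i: "i < j" "x \<in> Ws ! i" unfolding Wlt_def by blast
          have "i < s" using i(1) j by simp
          then show "x \<in> X" using Wi[of i] i(2) by blast
        qed
        show "finite (Wlt j)" using Wlt_fin j by simp
        show "Min (Ws ! j) \<in> X" using Min_in[OF W(1) W(4)] W(2) by blast
        show "\<forall>z\<in>Wlt j. z < Min (Ws ! j)"
        proof
          fix z assume "z \<in> Wlt j"
          then obtain i where i: "i < j" "z \<in> Ws ! i" unfolding Wlt_def by blast
          then show "z < Min (Ws ! j)" using Word[OF i(1) j] Min_in[OF W(1) W(4)] by blast
        qed
      qed
      finally show ?thesis .
    qed
    from PL1[OF W(1) esW[OF j] W3 this] show "\<exists>Uj. large [n + 1] {y \<in> Ws ! j. T j y = Uj}" by blast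
  qed
  from bchoice[OF this] obtain Uf where Uf: "\<forall>j\<in>{..<s}. large [n + 1] {y \<in> Ws ! j. T j y = Uf j}" by blast
  define V where "V j = {y \<in> Ws ! j. T j y = Uf j}" for j
  have Vi: "finite (V j) \<and> V j \<subseteq> Ws ! j \<and> large [Suc n] (V j) \<and> V j \<noteq> {}" if "j < s" for j
  proof -
    have l: "large [n + 1] (V j)" using Uf that unfolding V_def by simp
    then have l: "large [Suc n] (V j)" unfolding e3(3) .
    have "finite (V j)" using Wi[OF that] unfolding V_def by simp
    then show ?thesis using l large_nonempty[OF l] unfolding V_def by auto
  qed
  define g where "g x = {j' \<in> {..<s}. x \<in> Uf j'}" for x
  have "\<forall>j\<in>{..<s}. \<exists>Q. large [n] {x \<in> V j. g x = Q}"
  proof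
    fix j assume "j \<in> {..<s}"
    then have j: "j < s" by simp
    have V: "finite (V j)" "V j \<subseteq> Ws ! j" "large [Suc n] (V j)" "V j \<noteq> {}" using Vi[OF j] by simp_all
    have esV: "exp_sparse (V j)" using es_sub[OF esW[OF j] V(2)] .
    have "card (g ` V j) \<le> Min (V j)"
    proof -
      have "g ` V j \<subseteq> Pow {..<s}" unfolding g_def by auto
      then have "card (g ` V j) \<le> card (Pow {..<s})" by (intro card_mono) auto
      also have "\<dots> = 2 ^ s" by (simp add: card_Pow)
      also have "\<dots> \<le> Min (V j)"
      proof -
        have mV: "Min (V j) \<in> Ws ! j" using Min_in[OF V(1) V(4)] V(2) by blast
        have "s < Min (V j)" using Wi[OF j] mV by blast
        moreover have "Min (V j) \<in> X" using Wi[OF j] mV by blast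
        moreover have "s \<in> X" using sF0 F0(2) A1(2) by blast
        ultimately have "4 ^ s < Min (V j)" using es_lt[OF es] by blast
        moreover have "(2::nat) ^ s \<le> 4 ^ s" by (rule power_mono) simp_all
        ultimately show ?thesis by linarith
      qed
      finally show ?thesis .
    qed
    from PL1[OF V(1) esV V(3) this] show "\<exists>Q. large [n] {x \<in> V j. g x = Q}" by blast
  qed
  from bchoice[OF this] obtain Qf where Qf: "\<forall>j\<in>{..<s}. large [n] {x \<in> V j. g x = Qf j}" by blast
  define F' where "F' j = {x \<in> V j. g x = Qf j}" for j
  have F'i: "finite (F' j) \<and> F' j \<subseteq> Ws ! j \<and> large [n] (F' j) \<and> F' j \<noteq> {}" if "j < s" for j
  proof -
    have l: "large [n] (F' j)" using Qf that unfolding F'_def by simp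
    have "F' j \<subseteq> Ws ! j" using Vi[OF that] unfolding F'_def by auto
    moreover have "finite (F' j)" using Vi[OF that] unfolding F'_def by simp
    ultimately show ?thesis using l large_nonempty[OF l] by blast
  qed
  define Fs where "Fs = F0 # map F' [0..<s]"
  have F0X: "F0 \<subseteq> X" using F0(2) A1(2) by blast
  have F'W: "F' j \<subseteq> Ws ! j" if "j < s" for j using F'i[OF that] by blast
  have F'X: "F' j \<subseteq> X" if "j < s" for j using F'W[OF that] Wi[OF that] by blast
  have F'A2: "F' j \<subseteq> A2" if "j < s" for j using F'W[OF that] Wi[OF that] R'(2) by blast
  have setFs: "set Fs = insert F0 (F' ` {..<s})" unfolding Fs_def by auto
  have c1: "\<forall>G\<in>set Fs. finite G \<and> G \<subseteq> X \<and> large [n] G"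
  proof
    fix G assume "G \<in> set Fs"
    then have "G = F0 \<or> (\<exists>j<s. G = F' j)" unfolding setFs by blast
    then show "finite G \<and> G \<subseteq> X \<and> large [n] G"
    proof
      assume "G = F0" then show ?thesis using F0 F0X by blast
    next
      assume "\<exists>j<s. G = F' j"
      then obtain j where "j < s" "G = F' j" by blast
      then show ?thesis using F'i F'X by blast
    qed
  qed
  let ?R = "\<lambda>A B. \<forall>a\<in>A. \<forall>b\<in>B. (a::nat) < b"
  have RF0: "?R F0 (F' j)" if "j < s" for j using A12 F0(2) F'A2[OF that] by blast
  have RF': "?R (F' i) (F' j)" if "i < j" "j < s" for i j
    using Word[OF that] F'W[OF that(2)] F'W[of i] that by (meson less_trans subsetD)
  have c2: "sorted_wrt ?R Fs"
  proof -
    have "sorted_wrt ?R (map F' [0..<s])" unfolding sorted_wrt_map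
    proof (rule sorted_wrt_mono_rel[OF _ sorted_wrt_upt])
      fix x y assume xy: "x \<in> set [0..<s]" "y \<in> set [0..<s]" "x < y"
      have "y < s" using xy(2) by simp
      then show "?R (F' x) (F' y)" by (rule RF'[OF xy(3)])
    qed
    moreover have "\<forall>G\<in>set (map F' [0..<s]). ?R F0 G"
    proof
      fix G assume "G \<in> set (map F' [0..<s])"
      then obtain j where j: "j < s" "G = F' j" by auto
      show "?R F0 G" unfolding j(2) by (rule RF0[OF j(1)])
    qed
    ultimately show ?thesis unfolding Fs_def sorted_wrt.simps(2) by (rule conjI[rotated])
  qed
  let ?H = "\<lambda>A B. \<forall>x\<in>A. \<forall>x'\<in>A. \<forall>y\<in>B. \<forall>y'\<in>B. P x y = P x' y'"
  have HF0: "?H F0 (F' j)" if j: "j < s" for j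
  proof -
    have k: "P x y = bb" if "x \<in> F0" "y \<in> F' j" for x y
    proof -
      have "y \<in> Ws ! j" using that(2) F'W[OF j] by blast
      then have "y \<in> R'" using WR[OF j] by blast
      then have "f0 y = U" unfolding R'_def by simp
      moreover have "x \<in> A1" "(x \<in> U) = bb" using that(1) unfolding F0_def by auto
      ultimately show ?thesis unfolding f0_def by auto
    qed
    show ?thesis using k by simp
  qed
  have HF': "?H (F' i) (F' j)" if ij: "i < j" "j < s" for i j
  proof -
    have i: "i < s" using ij by simp
    have k: "P x y = (j \<in> Qf i)" if "x \<in> F' i" "y \<in> F' j" for x y
    proof -
      have "y \<in> V j" using that(2) unfolding F'_def by simp
      then have Ty: "T j y = Uf j" unfolding V_def by simp
      have "x \<in> Ws ! i" using that(1) F'W[OF i] by blast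
      then have xW: "x \<in> Wlt j" unfolding Wlt_def using ij(1) by blast
      have "P x y = (x \<in> T j y)" unfolding T_def using xW by simp
      also have "\<dots> = (x \<in> Uf j)" using Ty by simp
      also have "\<dots> = (j \<in> g x)" unfolding g_def using ij(2) by simp
      also have "g x = Qf i" using that(1) unfolding F'_def by simp
      finally show ?thesis .
    qed
    show ?thesis using k by simp
  qed
  have c4: "sorted_wrt ?H Fs"
  proof -
    have "sorted_wrt ?H (map F' [0..<s])" unfolding sorted_wrt_map
    proof (rule sorted_wrt_mono_rel[OF _ sorted_wrt_upt])
      fix x y assume xy: "x \<in> set [0..<s]" "y \<in> set [0..<s]" "x < y"
      have "y < s" using xy(2) by simp
      then show "?H (F' x) (F' y)" by (rule HF'[OF xy(3)])
    qed
    moreover have "\<forall>G\<in>set (map F' [0..<s]). ?H F0 G"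
    proof
      fix G assume "G \<in> set (map F' [0..<s])"
      then obtain j where j: "j < s" "G = F' j" by auto
      show "?H F0 G" unfolding j(2) by (rule HF0[OF j(1)])
    qed
    ultimately show ?thesis unfolding Fs_def sorted_wrt.simps(2) by (rule conjI[rotated])
  qed
  have c3: "large [1] (set (map Max Fs))"
  proof -
    have ne: "\<forall>G\<in>set Fs. finite G \<and> G \<noteq> {}"
    proof
      fix G assume "G \<in> set Fs"
      then have "finite G" "large [n] G" using c1 by blast+
      then show "finite G \<and> G \<noteq> {}" using large_nonempty[of "[n]" G] by simp
    qed
    have sm: "sorted_wrt (<) (map Max Fs)" unfolding sorted_wrt_map
    proof (rule sorted_wrt_mono_rel[OF _ c2])
      fix A B assume AB: "A \<in> set Fs" "B \<in> set Fs" "?R A B"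
      have "finite A" "A \<noteq> {}" "finite B" "B \<noteq> {}" using ne AB(1,2) by blast+
      then have "Max A \<in> A" "Max B \<in> B" by simp_all
      then show "Max A < Max B" using AB(3) by blast
    qed
    have ms: "map Max Fs = s # map (\<lambda>j. Max (F' j)) [0..<s]" unfolding Fs_def s_def by simp
    have fin: "finite (set (map Max Fs))" by simp
    have nem: "set (map Max Fs) \<noteq> {}" unfolding ms by simp
    have dm: "distinct (map Max Fs)" using sm strict_sorted_iff by blast
    have ln: "length (map Max Fs) = Suc s" unfolding Fs_def by simp
    have card: "card (set (map Max Fs)) = Suc s" using distinct_card[OF dm] ln by linarith
    have gt: "\<forall>x\<in>set (map (\<lambda>j. Max (F' j)) [0..<s]). s < x" using sm unfolding ms by simp
    have mn: "Min (set (map Max Fs)) = s"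
    proof (rule Min_eqI[OF fin])
      show "s \<in> set (map Max Fs)" unfolding ms by simp
      fix y assume "y \<in> set (map Max Fs)"
      then show "s \<le> y" unfolding ms using gt by fastforce
    qed
    show ?thesis using large1_iff[OF fin nem] mn card by simp
  qed
  have "grp [n] [1] X P Fs" unfolding grp_def using c1 c2 c3 c4 by (intro conjI)
  then show ?thesis by (rule exI)
qed



lemma maxes_sorted:
  assumes "\<forall>G\<in>set Gs. finite G \<and> G \<noteq> {}" "sorted_wrt (\<lambda>A B. \<forall>a\<in>A. \<forall>b\<in>B. (a::nat) < b) Gs"
  shows "sorted_wrt (<) (map Max Gs)"
  unfolding sorted_wrt_map
proof (rule sorted_wrt_mono_rel[OF _ assms(2)])
  fix A B assume AB: "A \<in> set Gs" "B \<in> set Gs" "\<forall>a\<in>A. \<forall>b\<in>B. a < b"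
  have "finite A" "A \<noteq> {}" "finite B" "B \<noteq> {}" using assms(1) AB(1,2) by blast+
  then have "Max A \<in> A" "Max B \<in> B" by simp_all
  then show "Max A < Max B" using AB(3) by blast
qed

lemma large_list: "sorted_wrt (<) xs \<Longrightarrow> large a (set xs) \<longleftrightarrow> foldl fund a xs = []"
  unfolding large_def using ssl_set by simp

lemma grp_ne: assumes "grp [n] be X P Gs" shows "\<forall>G\<in>set Gs. finite G \<and> G \<noteq> {}"
proof
  fix G assume "G \<in> set Gs"
  then have "finite G" "large [n] G" using assms unfolding grp_def by blast+
  then show "finite G \<and> G \<noteq> {}" using large_nonempty[of "[n]" G] by simp
qed

lemma main: "finite X \<Longrightarrow> exp_sparse X \<Longrightarrow> large [n + 6 * k] X \<Longrightarrow> \<exists>Gs. grp [n] [k] X P Gs"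
proof (induction k arbitrary: n X)
  case 0
  have ne: "X \<noteq> {}" using large_nonempty[of "[n + 6 * 0]" X] 0 by simp
  have l: "large [n] X" using 0(3) by simp
  have "large [0] (set (map Max [X]))" using large0[of "{Max X}"] by simp
  then have "grp [n] [0] X P [X]" unfolding grp_def using 0(1) l by simp
  then show ?case by blast
next
  case (Suc k)
  have e: "n + 6 * Suc k = (n + 6 * k) + 6" by simp
  have lg: "large [(n + 6 * k) + 6] X" using Suc.prems(3) unfolding e .
  obtain Fs where Fs: "grp [n + 6 * k] [1] X P Fs" using base[OF Suc.prems(1,2) lg] by blast
  have F1: "\<forall>F\<in>set Fs. finite F \<and> F \<subseteq> X \<and> large [n + 6 * k] F" using Fs unfolding grp_def by blast
  let ?R = "\<lambda>A B. \<forall>a\<in>A. \<forall>b\<in>B. (a::nat) < b"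
  let ?H = "\<lambda>A B. \<forall>x\<in>A. \<forall>x'\<in>A. \<forall>y\<in>B. \<forall>y'\<in>B. P x y = P x' y'"
  have F2: "sorted_wrt ?R Fs" using Fs unfolding grp_def by blast
  have F3: "large [1] (set (map Max Fs))" using Fs unfolding grp_def by blast
  have F4: "sorted_wrt ?H Fs" using Fs unfolding grp_def by blast
  have "\<forall>F\<in>set Fs. \<exists>Gs. grp [n] [k] F P Gs"
  proof
    fix F assume F: "F \<in> set Fs"
    have a: "finite F" "F \<subseteq> X" "large [n + 6 * k] F" using F1 F by blast+
    have b: "exp_sparse F" using es_sub[OF Suc.prems(2) a(2)] .
    show "\<exists>Gs. grp [n] [k] F P Gs" by (rule Suc.IH[OF a(1) b a(3)])
  qed
  from bchoice[OF this] obtain inner where inner: "\<forall>F\<in>set Fs. grp [n] [k] F P (inner F)" by blast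
  have I1: "\<forall>G\<in>set (inner F). finite G \<and> G \<subseteq> F \<and> large [n] G" if "F \<in> set Fs" for F
    using inner that unfolding grp_def by blast
  have I2: "sorted_wrt ?R (inner F)" if "F \<in> set Fs" for F using inner that unfolding grp_def by blast
  have I3: "large [k] (set (map Max (inner F)))" if "F \<in> set Fs" for F using inner that unfolding grp_def by blast
  have I4: "sorted_wrt ?H (inner F)" if "F \<in> set Fs" for F using inner that unfolding grp_def by blast
  define Gs where "Gs = concat (map inner Fs)"
  have memG: "\<exists>F\<in>set Fs. G \<in> set (inner F)" if "G \<in> set Gs" for G using that unfolding Gs_def by auto
  have c1: "\<forall>G\<in>set Gs. finite G \<and> G \<subseteq> X \<and> large [n] G"
  proof
    fix G assume "G \<in> set Gs"
    then obtain F where F: "F \<in> set Fs" "G \<in> set (inner F)" using memG by blast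
    have "finite G" "G \<subseteq> F" "large [n] G" using I1[OF F(1)] F(2) by blast+
    moreover have "F \<subseteq> X" using F1 F(1) by blast
    ultimately show "finite G \<and> G \<subseteq> X \<and> large [n] G" by blast
  qed
  have c2: "sorted_wrt ?R Gs" unfolding Gs_def sorted_wrt_concat_iff
  proof (intro conjI)
    show "\<forall>xs\<in>set (map inner Fs). sorted_wrt ?R xs" using I2 by auto
    show "sorted_wrt (\<lambda>xs ys. \<forall>x\<in>set xs. \<forall>y\<in>set ys. ?R x y) (map inner Fs)"
      unfolding sorted_wrt_map
    proof (rule sorted_wrt_mono_rel[OF _ F2])
      fix F F' assume FF: "F \<in> set Fs" "F' \<in> set Fs" "?R F F'"
      show "\<forall>x\<in>set (inner F). \<forall>y\<in>set (inner F'). ?R x y"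
      proof (intro ballI)
        fix G G' a b assume GG: "G \<in> set (inner F)" "G' \<in> set (inner F')" "a \<in> G" "b \<in> G'"
        have "G \<subseteq> F" using I1[OF FF(1)] GG(1) by blast
        moreover have "G' \<subseteq> F'" using I1[OF FF(2)] GG(2) by blast
        ultimately show "a < b" using FF(3) GG(3,4) by blast
      qed
    qed
  qed
  have c4: "sorted_wrt ?H Gs" unfolding Gs_def sorted_wrt_concat_iff
  proof (intro conjI)
    show "\<forall>xs\<in>set (map inner Fs). sorted_wrt ?H xs" using I4 by auto
    show "sorted_wrt (\<lambda>xs ys. \<forall>x\<in>set xs. \<forall>y\<in>set ys. ?H x y) (map inner Fs)"
      unfolding sorted_wrt_map
    proof (rule sorted_wrt_mono_rel[OF _ F4])
      fix F F' assume FF: "F \<in> set Fs" "F' \<in> set Fs" "?H F F'"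
      show "\<forall>x\<in>set (inner F). \<forall>y\<in>set (inner F'). ?H x y"
      proof (intro ballI)
        fix G G' x x' y y' assume GG: "G \<in> set (inner F)" "G' \<in> set (inner F')"
          "x \<in> G" "x' \<in> G" "y \<in> G'" "y' \<in> G'"
        have "G \<subseteq> F" using I1[OF FF(1)] GG(1) by blast
        moreover have "G' \<subseteq> F'" using I1[OF FF(2)] GG(2) by blast
        ultimately show "P x y = P x' y'" using FF(3) GG(3-6) by blast
      qed
    qed
  qed
  have c3: "large [Suc k] (set (map Max Gs))"
  proof -
    have neG: "\<forall>G\<in>set Gs. finite G \<and> G \<noteq> {}"
    proof
      fix G assume "G \<in> set Gs"
      then have "finite G" "large [n] G" using c1 by blast+
      then show "finite G \<and> G \<noteq> {}" using large_nonempty[of "[n]" G] by simp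
    qed
    have sm: "sorted_wrt (<) (map Max Gs)" by (rule maxes_sorted[OF neG c2])
    define ms where "ms F = map Max (inner F)" for F
    have mG: "map Max Gs = concat (map ms Fs)" unfolding Gs_def ms_def by (simp add: map_concat comp_def)
    have neF: "\<forall>F\<in>set Fs. finite F \<and> F \<noteq> {}" by (rule grp_ne[OF Fs])
    have smF: "sorted_wrt (<) (map Max Fs)" by (rule maxes_sorted[OF neF F2])
    have msl: "foldl fund [k] (ms F) = []" if "F \<in> set Fs" for F
    proof -
      have "sorted_wrt (<) (ms F)" unfolding ms_def
        by (rule maxes_sorted[OF grp_ne[OF inner[rule_format, OF that]] I2[OF that]])
      then show ?thesis using I3[OF that] large_list unfolding ms_def by blast
    qed
    have "Fs \<noteq> []" using large_nonempty[OF F3] by auto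
    then obtain F0 Fs' where Fs0: "Fs = F0 # Fs'" by (cases Fs) auto
    have F0: "F0 \<in> set Fs" using Fs0 by simp
    have lenb: "Max F0 \<le> length Fs'"
    proof -
      have fin: "finite (set (map Max Fs))" by simp
      have nem: "set (map Max Fs) \<noteq> {}" using Fs0 by simp
      have dm: "distinct (map Max Fs)" using smF strict_sorted_iff by blast
      have card: "card (set (map Max Fs)) = Suc (length Fs')" using distinct_card[OF dm] Fs0 by simp
      have gt: "\<forall>x\<in>set (map Max Fs'). Max F0 < x" using smF Fs0 by simp
      have mn: "Min (set (map Max Fs)) = Max F0"
      proof (rule Min_eqI[OF fin])
        show "Max F0 \<in> set (map Max Fs)" using Fs0 by simp
        fix y assume "y \<in> set (map Max Fs)"
        then show "Max F0 \<le> y" using gt Fs0 by fastforce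
      qed
      show ?thesis using large1_iff[OF fin nem] F3 mn card by simp
    qed
    have "ms F0 \<noteq> []" using msl[OF F0] by auto
    then obtain m0 rest where m0: "ms F0 = m0 # rest" by (cases "ms F0") auto
    have m0le: "m0 \<le> Max F0"
    proof -
      have "inner F0 \<noteq> []" using m0 unfolding ms_def by auto
      then obtain G0 Gr where G0: "inner F0 = G0 # Gr" by (cases "inner F0") auto
      have m0G: "m0 = Max G0" using m0 G0 unfolding ms_def by simp
      have G0F: "G0 \<subseteq> F0" "finite G0" "G0 \<noteq> {}" using I1[OF F0] grp_ne[OF inner[rule_format, OF F0]] G0 by auto
      have "finite F0" using neF F0 by blast
      then show ?thesis using m0G Max_mono[OF G0F(1) G0F(3)] by simp
    qed
    have L: "map Max Gs = m0 # rest @ concat (map ms Fs')" using mG Fs0 m0 by simp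
    have sL: "sorted (m0 # rest @ concat (map ms Fs'))" using sm L strict_sorted_iff by metis
    have s2: "sorted (rest @ concat (map ms Fs'))" using sL by simp
    have s3: "sorted (concat (map ms Fs'))" using s2 sorted_append by blast
    have each: "\<forall>ys\<in>set (map ms Fs'). foldl fund [k] ys = []" using msl Fs0 by auto
    have "foldl fund (replicate m0 k) (concat (map ms Fs')) = []"
      using cat_list[OF s3 _ each] m0le lenb by simp
    then have "foldl fund (replicate m0 k) (rest @ concat (map ms Fs')) = []"
      using prepend_list s2 by blast
    then have "foldl fund [Suc k] (map Max Gs) = []" using L by simp
    then show ?thesis using large_list[OF sm] by blast
  qed
  have "grp [n] [Suc k] X P Gs" unfolding grp_def using c1 c2 c3 c4 by (intro conjI)
  then show ?case by blast
qed

theorem theorem2p4: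
  fixes n k :: nat and X :: "nat set"
  assumes "finite X"
    and "large (omega_pow (n + 6 * k)) X"
    and "exp_sparse X"
  shows "\<forall>P :: nat \<Rightarrow> nat \<Rightarrow> bool. \<exists>l F. grouping (omega_pow n) (omega_pow k) X P l F"
proof
  fix P :: "nat \<Rightarrow> nat \<Rightarrow> bool"
  have lg: "large [n + 6 * k] X" using assms(2) unfolding omega_pow_def .
  obtain Gs where "grp [n] [k] X P Gs" using main[OF assms(1) assms(3) lg] by blast
  then have "grouping [n] [k] X P (length Gs) (\<lambda>i. Gs ! i)" by (rule grp_grouping)
  then show "\<exists>l F. grouping (omega_pow n) (omega_pow k) X P l F" unfolding omega_pow_def by blast
qed


end
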